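(* Let $X$ be an abelian metric group and $f:X\to\mathbb{R}$ any function. Then: (i) if $f$ is locally bounded at some point, then $f$ is bounded on some shift-compact set in $X$; (ii) if $f$ is bounded on some shift-compact set in $X$, then $f$ is a WNT-function.
   Context: An abelian metric group is an abelian topological group whose topology is given by an invariant metric. A set $A\subset X$ is shift-compact if for every sequence $(x_n)$ tending to $0$ in $X$ there exists $x\in X$ such that $\{n\in\mathbb{N}: x+x_n\in A\}$ is infinite. Locally bounded at a point means $|f|$ is bounded on some neighbourhood of that point. For $k\in\mathbb{N}$ let $H^k:=f^{-1}((-k,k))$. $f$ is a WNT-function if for every convergent sequence $(u_n)_{n\in\mathbb{N}}$ in $X$ there exist $k\in\mathbb{N}$, an infinite set $\mathbb{M}\subset\mathbb{N}$ and $t\in X$ such that $\{t+u_m: m\in\mathbb{M}\}\subset H^k$. *)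

theory Defs
  imports "HOL-Analysis.Analysis"
begin

text \<open>An abelian metric group: a type of class ab_group_add and metric_space
  (so the topology is the metric topology) whose metric is translation invariant.\<close>
definition invariant_metric_group :: "('a::{ab_group_add, metric_space}) itself \<Rightarrow> bool" where
  "invariant_metric_group _ \<longleftrightarrow> (\<forall>x y z::'a. dist (x + z) (y + z) = dist x y)"

definition shift_compact :: "('a::{ab_group_add, metric_space}) set \<Rightarrow> bool" where
  "shift_compact A \<longleftrightarrow>
     (\<forall>xs::nat \<Rightarrow> 'a. xs \<longlonglongrightarrow> 0 \<longrightarrow> (\<exists>x. infinite {n. x + xs n \<in> A}))"

definition locally_bounded_at :: "('a::topological_space \<Rightarrow> real) \<Rightarrow> 'a \<Rightarrow> bool" where
  "locally_bounded_at f p \<longleftrightarrow> (\<exists>U B. open U \<and> p \<in> U \<and> (\<forall>x\<in>U. \<bar>f x\<bar> \<le> B))"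

definition bounded_on :: "('a \<Rightarrow> real) \<Rightarrow> 'a set \<Rightarrow> bool" where
  "bounded_on f A \<longleftrightarrow> (\<exists>B. \<forall>x\<in>A. \<bar>f x\<bar> \<le> B)"

definition Hk :: "('a \<Rightarrow> real) \<Rightarrow> nat \<Rightarrow> 'a set" where
  "Hk f k = f -` {-real k<..<real k}"

definition WNT_function :: "('a::{ab_group_add, metric_space} \<Rightarrow> real) \<Rightarrow> bool" where
  "WNT_function f \<longleftrightarrow>
     (\<forall>u::nat \<Rightarrow> 'a. convergent u \<longrightarrow>
        (\<exists>k::nat. \<exists>M::nat set. \<exists>t. infinite M \<and> (\<forall>m\<in>M. t + u m \<in> Hk f k)))"

end

theory Submission
  imports Defs
begin

theorem proposition3p3:
  fixes f :: "'a::{ab_group_add, metric_space} \<Rightarrow> real"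
  assumes "invariant_metric_group TYPE('a)"
  shows "((\<exists>p. locally_bounded_at f p) \<longrightarrow> (\<exists>A. shift_compact A \<and> bounded_on f A))
       \<and> ((\<exists>A. shift_compact A \<and> bounded_on f A) \<longrightarrow> WNT_function f)"
proof (intro conjI impI)
  have inv: "\<And>x y z::'a. dist (x + z) (y + z) = dist x y"
    using assms unfolding invariant_metric_group_def by blast
  {
    assume "\<exists>p. locally_bounded_at f p"
    then obtain p U B where U: "open U" "p \<in> U" "\<forall>x\<in>U. \<bar>f x\<bar> \<le> B"
      unfolding locally_bounded_at_def by blast
    have "shift_compact U"
      unfolding shift_compact_def
    proof (intro allI impI)
      fix xs :: "nat \<Rightarrow> 'a" assume xs: "xs \<longlonglongrightarrow> 0"
      have "(\<lambda>n. p + xs n) \<longlonglongrightarrow> p"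
      proof (rule tendstoI)
        fix e :: real assume "e > 0"
        then have "\<forall>\<^sub>F n in sequentially. dist (xs n) 0 < e" using xs tendstoD by blast
        then show "\<forall>\<^sub>F n in sequentially. dist (p + xs n) p < e"
        proof (rule eventually_mono)
          fix n assume "dist (xs n) 0 < e"
          moreover have "dist (p + xs n) p = dist (xs n) 0"
          proof -
            have "dist (xs n + p) (0 + p) = dist (xs n) 0" by (rule inv)
            moreover have "xs n + p = p + xs n" by (rule add.commute)
            ultimately show ?thesis by simp
          qed
          ultimately show "dist (p + xs n) p < e" by simp
        qed
      qed
      then have "\<forall>\<^sub>F n in sequentially. p + xs n \<in> U"
        using U(1,2) topological_tendstoD by blast
      then have "frequently (\<lambda>n. p + xs n \<in> U) sequentially"
        by (simp add: eventually_frequently)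
      then have "infinite {n. p + xs n \<in> U}"
        by (simp add: frequently_cofinite[symmetric] cofinite_eq_sequentially
            Inf_many_def[symmetric] INFM_nat_le)
      then show "\<exists>x. infinite {n. x + xs n \<in> U}" by blast
    qed
    moreover have "bounded_on f U" unfolding bounded_on_def using U(3) by blast
    ultimately show "\<exists>A. shift_compact A \<and> bounded_on f A" by blast
  }
  {
    assume "\<exists>A. shift_compact A \<and> bounded_on f A"
    then obtain A B where A: "shift_compact A" "\<forall>x\<in>A. \<bar>f x\<bar> \<le> B"
      unfolding bounded_on_def by blast
    show "WNT_function f"
      unfolding WNT_function_def
    proof (intro allI impI)
      fix u :: "nat \<Rightarrow> 'a" assume "convergent u"
      then obtain L where L: "u \<longlonglongrightarrow> L" unfolding convergent_def by blast
      have "(\<lambda>n. u n - L) \<longlonglongrightarrow> 0"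
      proof (rule tendstoI)
        fix e :: real assume "e > 0"
        then have "\<forall>\<^sub>F n in sequentially. dist (u n) L < e" using L tendstoD by blast
        then show "\<forall>\<^sub>F n in sequentially. dist (u n - L) 0 < e"
        proof (rule eventually_mono)
          fix n assume "dist (u n) L < e"
          moreover have "dist (u n - L) 0 = dist (u n) L"
          proof -
            have "dist (u n - L + L) (0 + L) = dist (u n - L) 0" by (rule inv)
            then show ?thesis by simp
          qed
          ultimately show "dist (u n - L) 0 < e" by simp
        qed
      qed
      then obtain x where x: "infinite {n. x + (u n - L) \<in> A}"
        using A(1) unfolding shift_compact_def by blast
      define k where "k = nat (floor B) + 1"
      have Bk: "B < real k" unfolding k_def by linarith
      have "\<forall>m\<in>{n. x + (u n - L) \<in> A}. (x - L) + u m \<in> Hk f k"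
      proof
        fix m assume "m \<in> {n. x + (u n - L) \<in> A}"
        then have "(x - L) + u m \<in> A" by (simp add: algebra_simps)
        then have "\<bar>f ((x - L) + u m)\<bar> \<le> B" using A(2) by blast
        then show "(x - L) + u m \<in> Hk f k" unfolding Hk_def using Bk by auto
      qed
      then show "\<exists>k M t. infinite M \<and> (\<forall>m\<in>M. t + u m \<in> Hk f k)" using x by blast
    qed
  }
qed

end
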